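(* Let $(\alpha_s)$, $(\sigma_s)$ be positive coefficients with $\alpha_s^2+\sigma_s^2=1$. Fix reverse times $t+\Delta t$, $t$, $t-\Delta t$, a vector $\boldsymbol{\epsilon}\in\mathbb{R}^n$ (the noise prediction $\bm{\epsilon}_\Theta(\boldsymbol{x}_t,t)$, treated as deterministic), and a real number $\beta_t>0$. Let $\mu_t,\mu_{t+\Delta t}\in\mathbb{R}^n$ be deterministic vectors and let $\eta_t,\eta_{t+\Delta t}$ be random vectors in $\mathbb{R}^n$ with $\mathbb{E}[\eta_t]=\mathbb{E}[\eta_{t+\Delta t}]=0$, $\mathrm{Var}(\eta_t)=\mathrm{Var}(\eta_{t+\Delta t})=\Sigma_t$ and $\mathrm{Cov}(\eta_t,\eta_{t+\Delta t})=\rho_t\Sigma_t$ for some $0\le\rho_t<1$. Set $\boldsymbol{D}_t=\mu_t+\eta_t$, $\boldsymbol{D}_{t+\Delta t}=\mu_{t+\Delta t}+\eta_{t+\Delta t}$, $\widetilde{\boldsymbol{D}}_t=(1-\beta_t)\boldsymbol{D}_t+\beta_t\boldsymbol{D}_{t+\Delta t}$, $r_t:=\mu_{t+\Delta t}-\mu_t$, and $$\boldsymbol{x}^{\mathrm{PS}}_{t-\Delta t}=\alpha_{t-\Delta t}\boldsymbol{D}_t+\sigma_{t-\Delta t}\boldsymbol{\epsilon},\quad \boldsymbol{x}^{\mathrm{LAMP}}_{t-\Delta t}=\alpha_{t-\Delta t}\widetilde{\boldsymbol{D}}_t+\sigma_{t-\Delta t}\boldsymbol{\epsilon},\quad \boldsymbol{x}^{\mu}_{t-\Delta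 t}=\alpha_{t-\Delta t}\mu_t+\sigma_{t-\Delta t}\boldsymbol{\epsilon}.$$ Then $$\mathbb{E}\|\boldsymbol{x}^{\mathrm{PS}}_{t-\Delta t}-\boldsymbol{x}^{\mu}_{t-\Delta t}\|^2=\alpha_{t-\Delta t}^2\,\mathrm{tr}(\Sigma_t),$$ $$\mathbb{E}\|\boldsymbol{x}^{\mathrm{LAMP}}_{t-\Delta t}-\boldsymbol{x}^{\mu}_{t-\Delta t}\|^2=\alpha_{t-\Delta t}^2\Big[\big(1-2\beta_t(1-\beta_t)(1-\rho_t)\big)\mathrm{tr}(\Sigma_t)+\beta_t^2\|r_t\|^2\Big].$$ Consequently, $\mathbb{E}\|\boldsymbol{x}^{\mathrm{LAMP}}_{t-\Delta t}-\boldsymbol{x}^{\mu}_{t-\Delta t}\|^2<\mathbb{E}\|\boldsymbol{x}^{\mathrm{PS}}_{t-\Delta t}-\boldsymbol{x}^{\mu}_{t-\Delta t}\|^2$ whenever $$\beta_t\|r_t\|^2<2(1-\beta_t)(1-\rho_t)\,\mathrm{tr}(\Sigma_t).$$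
   Context: $\boldsymbol{D}_t,\boldsymbol{D}_{t+\Delta t}$ model data-consistent estimates in a diffusion posterior sampler as local targets $\mu$ plus zero-mean estimation errors $\eta$; $\boldsymbol{x}^{\mu}_{t-\Delta t}$ is the ideal one-step state. $\mathrm{Var}$ denotes the covariance matrix and $\mathrm{Cov}(\eta_t,\eta_{t+\Delta t})=\mathbb{E}[\eta_t\eta_{t+\Delta t}^\top]$; $\|\cdot\|$ is the Euclidean norm. *)

theory Defs
  imports "HOL-Probability.Probability"
begin

definition cov_matrix :: "'a measure \<Rightarrow> ('a \<Rightarrow> real^'n) \<Rightarrow> real^'n^'n" where
  "cov_matrix M X = (\<chi> i j. (\<integral>\<omega>. X \<omega> $ i * X \<omega> $ j \<partial>M)
                               - (\<integral>\<omega>. X \<omega> $ i \<partial>M) * (\<integral>\<omega>. X \<omega> $ j \<partial>M))"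

definition cross_cov :: "'a measure \<Rightarrow> ('a \<Rightarrow> real^'n) \<Rightarrow> ('a \<Rightarrow> real^'n) \<Rightarrow> real^'n^'n" where
  "cross_cov M X Y = (\<chi> i j. \<integral>\<omega>. X \<omega> $ i * Y \<omega> $ j \<partial>M)"

end

theory Submission
  imports Defs
begin

theorem proposition2:
  fixes M :: "'a measure"
    and alpha sigma :: "real \<Rightarrow> real"
    and t \<Delta>t \<beta> \<rho> :: real
    and \<epsilon> \<mu>t \<mu>s :: "real^'n"
    and \<eta>t \<eta>s :: "'a \<Rightarrow> real^'n"
    and \<Sigma> :: "real^'n^'n"
  assumes "prob_space M"
    and coef_pos: "\<And>s. alpha s > 0" "\<And>s. sigma s > 0"
    and coef_norm: "\<And>s. (alpha s)\<^sup>2 + (sigma s)\<^sup>2 = 1"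
    and beta_pos: "\<beta> > 0"
    and meas: "\<eta>t \<in> borel_measurable M" "\<eta>s \<in> borel_measurable M"
    and sq_int: "\<And>i. integrable M (\<lambda>\<omega>. (\<eta>t \<omega> $ i)\<^sup>2)"
                "\<And>i. integrable M (\<lambda>\<omega>. (\<eta>s \<omega> $ i)\<^sup>2)"
    and mean0: "(\<integral>\<omega>. \<eta>t \<omega> \<partial>M) = 0" "(\<integral>\<omega>. \<eta>s \<omega> \<partial>M) = 0"
    and var: "cov_matrix M \<eta>t = \<Sigma>" "cov_matrix M \<eta>s = \<Sigma>"
    and cov: "cross_cov M \<eta>t \<eta>s = \<rho> *\<^sub>R \<Sigma>"
    and rho: "0 \<le> \<rho>" "\<rho> < 1"
  shows
    "let D = (\<lambda>\<omega>. \<mu>t + \<eta>t \<omega>);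
         Ds = (\<lambda>\<omega>. \<mu>s + \<eta>s \<omega>);
         Dtil = (\<lambda>\<omega>. (1 - \<beta>) *\<^sub>R D \<omega> + \<beta> *\<^sub>R Ds \<omega>);
         r = \<mu>s - \<mu>t;
         a = alpha (t - \<Delta>t); sg = sigma (t - \<Delta>t);
         xPS = (\<lambda>\<omega>. a *\<^sub>R D \<omega> + sg *\<^sub>R \<epsilon>);
         xLAMP = (\<lambda>\<omega>. a *\<^sub>R Dtil \<omega> + sg *\<^sub>R \<epsilon>);
         xmu = a *\<^sub>R \<mu>t + sg *\<^sub>R \<epsilon>;
         EPS = (\<integral>\<omega>. (norm (xPS \<omega> - xmu))\<^sup>2 \<partial>M);
         ELAMP = (\<integral>\<omega>. (norm (xLAMP \<omega> - xmu))\<^sup>2 \<partial>M)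
     in EPS = a\<^sup>2 * trace \<Sigma>
      \<and> ELAMP = a\<^sup>2 * ((1 - 2 * \<beta> * (1 - \<beta>) * (1 - \<rho>)) * trace \<Sigma> + \<beta>\<^sup>2 * (norm r)\<^sup>2)
      \<and> (\<beta> * (norm r)\<^sup>2 < 2 * (1 - \<beta>) * (1 - \<rho>) * trace \<Sigma> \<longrightarrow> ELAMP < EPS)"
proof -
  interpret P: prob_space M by fact
  have nthm: "(\<lambda>\<omega>. X \<omega> $ i) \<in> borel_measurable M" if "X \<in> borel_measurable M" for X :: "'a \<Rightarrow> real^'n" and i
  proof -
    have "(\<lambda>\<omega>. X \<omega> \<bullet> axis i 1) \<in> borel_measurable M" using that(1) by measurable
    then show "(\<lambda>\<omega>. X \<omega> $ i) \<in> borel_measurable M" by (simp add: cart_eq_inner_axis)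
  qed
  have mt1[measurable]: "(\<lambda>\<omega>. \<eta>t \<omega> $ i) \<in> borel_measurable M" for i using nthm meas by blast
  have ms1[measurable]: "(\<lambda>\<omega>. \<eta>s \<omega> $ i) \<in> borel_measurable M" for i using nthm meas by blast
  have compint: "integrable M (\<lambda>\<omega>. X \<omega> $ i)" if "X \<in> borel_measurable M"
     "\<And>i. integrable M (\<lambda>\<omega>. (X \<omega> $ i)\<^sup>2)" for X :: "'a \<Rightarrow> real^'n" and i
  proof (rule P.square_integrable_imp_integrable)
    have "(\<lambda>\<omega>. X \<omega> \<bullet> axis i 1) \<in> borel_measurable M" using that(1) by measurable
    then show "(\<lambda>\<omega>. X \<omega> $ i) \<in> borel_measurable M" by (simp add: cart_eq_inner_axis)
  qed (use that in auto)
  have vecint: "integrable M X" if "X \<in> borel_measurable M"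
     "\<And>i. integrable M (\<lambda>\<omega>. (X \<omega> $ i)\<^sup>2)" for X :: "'a \<Rightarrow> real^'n"
  proof (rule Bochner_Integration.integrable_bound[where f="\<lambda>\<omega>. \<Sum>i\<in>UNIV. \<bar>X \<omega> $ i\<bar>"])
    show "integrable M (\<lambda>\<omega>. \<Sum>i\<in>UNIV. \<bar>X \<omega> $ i\<bar>)"
      using compint[OF that] by auto
    show "X \<in> borel_measurable M" by fact
    show "AE x in M. norm (X x) \<le> norm (\<Sum>i\<in>UNIV. \<bar>X x $ i\<bar>)"
      using norm_le_l1_cart by (auto intro!: AE_I2 simp: sum_nonneg)
  qed
  have mc: "(\<integral>\<omega>. X \<omega> $ i \<partial>M) = 0" if "X \<in> borel_measurable M"
     "\<And>i. integrable M (\<lambda>\<omega>. (X \<omega> $ i)\<^sup>2)" "(\<integral>\<omega>. X \<omega> \<partial>M) = 0" for X :: "'a \<Rightarrow> real^'n" and i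
  proof -
    have "(\<integral>\<omega>. X \<omega> $ i \<partial>M) = (\<integral>\<omega>. X \<omega> \<bullet> axis i 1 \<partial>M)"
      by (simp add: cart_eq_inner_axis)
    also have "\<dots> = (\<integral>\<omega>. X \<omega> \<partial>M) \<bullet> axis i 1"
      using vecint[OF that(1,2)] by simp
    finally show ?thesis using that(3) by simp
  qed
  have it: "\<And>i. integrable M (\<lambda>\<omega>. \<eta>t \<omega> $ i)" using compint meas sq_int by blast
  have is': "\<And>i. integrable M (\<lambda>\<omega>. \<eta>s \<omega> $ i)" using compint meas sq_int by blast
  have mt: "\<And>i. (\<integral>\<omega>. \<eta>t \<omega> $ i \<partial>M) = 0" using mc meas sq_int mean0 by blast
  have ms: "\<And>i. (\<integral>\<omega>. \<eta>s \<omega> $ i \<partial>M) = 0" using mc meas sq_int mean0 by blast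
  have vt: "\<And>i. (\<integral>\<omega>. (\<eta>t \<omega> $ i)\<^sup>2 \<partial>M) = \<Sigma> $ i $ i"
    using var(1) mt unfolding cov_matrix_def by (auto simp: power2_eq_square)
  have vs: "\<And>i. (\<integral>\<omega>. (\<eta>s \<omega> $ i)\<^sup>2 \<partial>M) = \<Sigma> $ i $ i"
    using var(2) ms unfolding cov_matrix_def by (auto simp: power2_eq_square)
  have cv: "\<And>i. (\<integral>\<omega>. \<eta>t \<omega> $ i * \<eta>s \<omega> $ i \<partial>M) = \<rho> * \<Sigma> $ i $ i"
  proof -
    fix i
    have "cross_cov M \<eta>t \<eta>s $ i $ i = (\<rho> *\<^sub>R \<Sigma>) $ i $ i" using cov by simp
    then show "(\<integral>\<omega>. \<eta>t \<omega> $ i * \<eta>s \<omega> $ i \<partial>M) = \<rho> * \<Sigma> $ i $ i"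
      unfolding cross_cov_def by simp
  qed
  have ixy: "\<And>i. integrable M (\<lambda>\<omega>. \<eta>t \<omega> $ i * \<eta>s \<omega> $ i)"
  proof -
    fix i
    show "integrable M (\<lambda>\<omega>. \<eta>t \<omega> $ i * \<eta>s \<omega> $ i)"
    proof (rule Bochner_Integration.integrable_bound[where f="\<lambda>\<omega>. (\<eta>t \<omega> $ i)\<^sup>2 + (\<eta>s \<omega> $ i)\<^sup>2"])
      show "integrable M (\<lambda>\<omega>. (\<eta>t \<omega> $ i)\<^sup>2 + (\<eta>s \<omega> $ i)\<^sup>2)" using sq_int by auto
      show "(\<lambda>\<omega>. \<eta>t \<omega> $ i * \<eta>s \<omega> $ i) \<in> borel_measurable M" using meas by measurable
      show "AE x in M. norm (\<eta>t x $ i * \<eta>s x $ i) \<le> norm ((\<eta>t x $ i)\<^sup>2 + (\<eta>s x $ i)\<^sup>2)"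
      proof (rule AE_I2)
        fix x
        have "\<bar>\<eta>t x $ i * \<eta>s x $ i\<bar> \<le> (\<eta>t x $ i)\<^sup>2 + (\<eta>s x $ i)\<^sup>2"
        proof -
          have "2 * \<bar>\<eta>t x $ i\<bar> * \<bar>\<eta>s x $ i\<bar> \<le> \<bar>\<eta>t x $ i\<bar>\<^sup>2 + \<bar>\<eta>s x $ i\<bar>\<^sup>2"
            by (rule sum_squares_bound)
          moreover have "0 \<le> \<bar>\<eta>t x $ i\<bar> * \<bar>\<eta>s x $ i\<bar>" by simp
          ultimately have "\<bar>\<eta>t x $ i\<bar> * \<bar>\<eta>s x $ i\<bar> \<le> \<bar>\<eta>t x $ i\<bar>\<^sup>2 + \<bar>\<eta>s x $ i\<bar>\<^sup>2" by linarith
          then show ?thesis by (simp add: abs_mult)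
        qed
        then show "norm (\<eta>t x $ i * \<eta>s x $ i) \<le> norm ((\<eta>t x $ i)\<^sup>2 + (\<eta>s x $ i)\<^sup>2)" by simp
      qed
    qed
  qed
  have key: "(\<integral>\<omega>. (norm (c + p *\<^sub>R \<eta>t \<omega> + q *\<^sub>R \<eta>s \<omega>))\<^sup>2 \<partial>M)
      = (norm c)\<^sup>2 + (p\<^sup>2 + q\<^sup>2 + 2 * p * q * \<rho>) * trace \<Sigma>" for c :: "real^'n" and p q
  proof -
    have e: "(norm (c + p *\<^sub>R \<eta>t \<omega> + q *\<^sub>R \<eta>s \<omega>))\<^sup>2 = (\<Sum>i\<in>UNIV.
       (c$i)\<^sup>2 + (2*p*c$i) * \<eta>t \<omega> $ i + (2*q*c$i) * \<eta>s \<omega> $ i + p\<^sup>2 * (\<eta>t \<omega> $ i)\<^sup>2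
       + q\<^sup>2 * (\<eta>s \<omega> $ i)\<^sup>2 + (2*p*q) * (\<eta>t \<omega> $ i * \<eta>s \<omega> $ i))" for \<omega>
      unfolding power2_norm_eq_inner inner_vec_def
      by (rule sum.cong) (auto simp: power2_eq_square algebra_simps)
    have ci: "(\<integral>\<omega>. (c$i)\<^sup>2 + (2*p*c$i) * \<eta>t \<omega> $ i + (2*q*c$i) * \<eta>s \<omega> $ i + p\<^sup>2 * (\<eta>t \<omega> $ i)\<^sup>2
       + q\<^sup>2 * (\<eta>s \<omega> $ i)\<^sup>2 + (2*p*q) * (\<eta>t \<omega> $ i * \<eta>s \<omega> $ i) \<partial>M)
       = (c$i)\<^sup>2 + (p\<^sup>2 + q\<^sup>2 + 2 * p * q * \<rho>) * \<Sigma> $ i $ i" for i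
      using it[of i] is'[of i] sq_int[of i] ixy[of i] mt[of i] ms[of i] vt[of i] vs[of i] cv[of i]
      by (simp add: P.prob_space algebra_simps)
    have "(\<integral>\<omega>. (norm (c + p *\<^sub>R \<eta>t \<omega> + q *\<^sub>R \<eta>s \<omega>))\<^sup>2 \<partial>M)
       = (\<Sum>i\<in>UNIV. (c$i)\<^sup>2 + (p\<^sup>2 + q\<^sup>2 + 2 * p * q * \<rho>) * \<Sigma> $ i $ i)"
      unfolding e
      apply (subst Bochner_Integration.integral_sum)
      subgoal for i using it[of i] is'[of i] sq_int[of i] ixy[of i] by auto
      using ci by simp
    also have "\<dots> = (norm c)\<^sup>2 + (p\<^sup>2 + q\<^sup>2 + 2 * p * q * \<rho>) * trace \<Sigma>"
      unfolding power2_norm_eq_inner inner_vec_def trace_def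
      by (simp add: sum.distrib sum_distrib_left power2_eq_square)
    finally show ?thesis .
  qed
  define a where "a = alpha (t - \<Delta>t)"
  define sg where "sg = sigma (t - \<Delta>t)"
  define r where "r = \<mu>s - \<mu>t"
  have apos: "a > 0" using coef_pos a_def by auto
  have EPS: "(\<integral>\<omega>. (norm ((a *\<^sub>R (\<mu>t + \<eta>t \<omega>) + sg *\<^sub>R \<epsilon>) - (a *\<^sub>R \<mu>t + sg *\<^sub>R \<epsilon>)))\<^sup>2 \<partial>M)
      = a\<^sup>2 * trace \<Sigma>"
  proof -
    have "\<And>\<omega>. (a *\<^sub>R (\<mu>t + \<eta>t \<omega>) + sg *\<^sub>R \<epsilon>) - (a *\<^sub>R \<mu>t + sg *\<^sub>R \<epsilon>)
       = 0 + a *\<^sub>R \<eta>t \<omega> + 0 *\<^sub>R \<eta>s \<omega>"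
      by (simp add: algebra_simps)
    then show ?thesis using key[of 0 a 0] by simp
  qed
  have ELAMP: "(\<integral>\<omega>. (norm ((a *\<^sub>R ((1 - \<beta>) *\<^sub>R (\<mu>t + \<eta>t \<omega>) + \<beta> *\<^sub>R (\<mu>s + \<eta>s \<omega>)) + sg *\<^sub>R \<epsilon>) - (a *\<^sub>R \<mu>t + sg *\<^sub>R \<epsilon>)))\<^sup>2 \<partial>M)
      = a\<^sup>2 * ((1 - 2 * \<beta> * (1 - \<beta>) * (1 - \<rho>)) * trace \<Sigma> + \<beta>\<^sup>2 * (norm r)\<^sup>2)"
  proof -
    have "\<And>\<omega>. (a *\<^sub>R ((1 - \<beta>) *\<^sub>R (\<mu>t + \<eta>t \<omega>) + \<beta> *\<^sub>R (\<mu>s + \<eta>s \<omega>)) + sg *\<^sub>R \<epsilon>) - (a *\<^sub>R \<mu>t + sg *\<^sub>R \<epsilon>)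
       = (a * \<beta>) *\<^sub>R r + (a * (1 - \<beta>)) *\<^sub>R \<eta>t \<omega> + (a * \<beta>) *\<^sub>R \<eta>s \<omega>"
      by (simp add: r_def algebra_simps)
    then have "(\<integral>\<omega>. (norm ((a *\<^sub>R ((1 - \<beta>) *\<^sub>R (\<mu>t + \<eta>t \<omega>) + \<beta> *\<^sub>R (\<mu>s + \<eta>s \<omega>)) + sg *\<^sub>R \<epsilon>) - (a *\<^sub>R \<mu>t + sg *\<^sub>R \<epsilon>)))\<^sup>2 \<partial>M)
       = (norm ((a * \<beta>) *\<^sub>R r))\<^sup>2 + ((a * (1 - \<beta>))\<^sup>2 + (a * \<beta>)\<^sup>2 + 2 * (a * (1 - \<beta>)) * (a * \<beta>) * \<rho>) * trace \<Sigma>"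
      using key[of "(a * \<beta>) *\<^sub>R r" "a * (1 - \<beta>)" "a * \<beta>"] by simp
    also have "\<dots> = a\<^sup>2 * ((1 - 2 * \<beta> * (1 - \<beta>) * (1 - \<rho>)) * trace \<Sigma> + \<beta>\<^sup>2 * (norm r)\<^sup>2)"
      by (simp add: power_mult_distrib power2_eq_square algebra_simps)
    finally show ?thesis .
  qed
  have imp: "\<beta> * (norm r)\<^sup>2 < 2 * (1 - \<beta>) * (1 - \<rho>) * trace \<Sigma> \<Longrightarrow>
     a\<^sup>2 * ((1 - 2 * \<beta> * (1 - \<beta>) * (1 - \<rho>)) * trace \<Sigma> + \<beta>\<^sup>2 * (norm r)\<^sup>2) < a\<^sup>2 * trace \<Sigma>"
  proof -
    assume h: "\<beta> * (norm r)\<^sup>2 < 2 * (1 - \<beta>) * (1 - \<rho>) * trace \<Sigma>"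
    have "\<beta> * (\<beta> * (norm r)\<^sup>2) < \<beta> * (2 * (1 - \<beta>) * (1 - \<rho>) * trace \<Sigma>)"
      using h beta_pos by simp
    then have "(1 - 2 * \<beta> * (1 - \<beta>) * (1 - \<rho>)) * trace \<Sigma> + \<beta>\<^sup>2 * (norm r)\<^sup>2 < trace \<Sigma>"
      by (simp add: power2_eq_square algebra_simps)
    then show ?thesis using apos by simp
  qed
  show ?thesis
    unfolding Let_def a_def[symmetric] sg_def[symmetric] r_def[symmetric]
    using EPS ELAMP imp by simp
qed

end
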